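(* Let $n\in\mathbb N$, let $J$ be an arbitrary $n$-field function and let $K_1,\dots,K_n$ be kernel functions satisfying (PM$_c$) for some $c>0$. Let $\mathbf y\in Y$. For each $j\in\{0,1,\dots,n\}$ let $t_{*j},t^*_j\in\operatorname{rint}I_j(\mathbf y)$ be arbitrary points with $t_{*j}\le t^*_j$. For each $j\in\{0,\dots,n\}$ and $r\in\{1,\dots,n\}$ let $$\mu_{jr}\in\bigl[D_-K_r(t^*_j-y_r),\,D_-K_r(t_{*j}-y_r)\bigr]$$ be arbitrary. Define the $n\times n$ matrix $A=[a_{jr}]_{j,r=1}^n$ by $a_{jr}:=\mu_{jr}-\mu_{(j-1)r}$. Then $$a_{rr}-\sum_{j=1,\,j\ne r}^n|a_{jr}|\ge c\qquad(r=1,\dots,n).$$ In particular, $A$ is invertible.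
   Context: A kernel function is a function $K:(-1,0)\cup(0,1)\to\mathbb R$ that is concave on $(-1,0)$ and concave on $(0,1)$ and satisfies $\lim_{t\downarrow0}K(t)=\lim_{t\uparrow0}K(t)$. It is extended to $[-1,1]$ by its one-sided limits. For $c\ge0$, a kernel function satisfies (PM$_c$) if $K'(t)-K'(t-1)\ge c$ for almost every $t\in(0,1)$. $D_-K$ denotes the left derivative. An $n$-field function is a function $J:[0,1]\to[-\infty,\infty)$ that is bounded above and whose set of finite values has total weight strictly greater than $n$. Here the points $0$ and $1$ each have weight $1/2$ and every point of $(0,1)$ has weight $1$. $S=\{\mathbf y\in\mathbb R^n:0<y_1<\dots<y_n<1\}$. Set $y_0:=0$ and $y_{n+1}:=1$. Let $I_j(\mathbf y)=[y_j,y_{j+1}]$ and $m_j(\mathbf y)=\sup_{t\in I_j(\mathbf y)}\bigl(J(t)+\sum_iK_i(t-y_i)\bigr)$. $Y=\{\mathbf y\in S:m_j(\mathbf y)\neq-\infty\ \forall j\}$. $\operatorname{rint}$ denotes the interior relative to $[0,1]$; thus $\operatorname{rint}I_0=[0,y_1)$, $\operatorname{rint}I_n=(y_n,1]$, and $\operatorname{rint}I_j=(y_j,y_{j+1})$ otherwise. *)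

theory Defs
  imports "HOL-Analysis.Analysis" "Jordan_Normal_Form.Matrix"
begin

text \<open>Kernel function: concave on (-1,0) and on (0,1), with equal one-sided limits at 0
  (limits taken in the extended reals, so the common value may be -infinity).\<close>
definition kernel :: "(real \<Rightarrow> real) \<Rightarrow> bool" where
  "kernel K \<longleftrightarrow> concave_on {-1<..<0} K \<and> concave_on {0<..<1} K \<and>
     (\<exists>L::ereal. ((\<lambda>t. ereal (K t)) \<longlongrightarrow> L) (at_left 0) \<and>
                 ((\<lambda>t. ereal (K t)) \<longlongrightarrow> L) (at_right 0))"

definition Kext :: "(real \<Rightarrow> real) \<Rightarrow> real \<Rightarrow> ereal" where
  "Kext K t = (if t \<in> {-1<..<0} \<union> {0<..<1} then ereal (K t)
     else if t = 0 then Lim (at_right 0) (\<lambda>s. ereal (K s))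
     else if t = -1 then Lim (at_right (-1)) (\<lambda>s. ereal (K s))
     else Lim (at_left 1) (\<lambda>s. ereal (K s)))"

definition PM :: "real \<Rightarrow> (real \<Rightarrow> real) \<Rightarrow> bool" where
  "PM c K \<longleftrightarrow> (AE t in lborel. t \<in> {0<..<1} \<longrightarrow>
      K differentiable (at t) \<and> K differentiable (at (t - 1)) \<and>
      deriv K t - deriv K (t - 1) \<ge> c)"

definition left_deriv :: "(real \<Rightarrow> real) \<Rightarrow> real \<Rightarrow> real" where
  "left_deriv K x = Lim (at_left 0) (\<lambda>h. (K (x + h) - K x) / h)"

definition weight :: "real set \<Rightarrow> ereal" where
  "weight F = (if infinite (F \<inter> {0<..<1}) then \<infinity>
     else ereal (real (card (F \<inter> {0<..<1})) + (if 0 \<in> F then 1/2 else 0)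
                 + (if 1 \<in> F then 1/2 else 0)))"

definition n_field :: "nat \<Rightarrow> (real \<Rightarrow> ereal) \<Rightarrow> bool" where
  "n_field n J \<longleftrightarrow> (\<exists>M::real. \<forall>t\<in>{0..1}. J t \<le> ereal M) \<and>
     weight {t\<in>{0..1}. J t \<noteq> -\<infinity>} > ereal (real n)"

definition yy :: "nat \<Rightarrow> (nat \<Rightarrow> real) \<Rightarrow> nat \<Rightarrow> real" where
  "yy n y j = (if j = 0 then 0 else if j = n + 1 then 1 else y j)"

definition inS :: "nat \<Rightarrow> (nat \<Rightarrow> real) \<Rightarrow> bool" where
  "inS n y \<longleftrightarrow> (\<forall>j\<in>{0..n}. yy n y j < yy n y (j + 1))"

definition m_val :: "nat \<Rightarrow> (real \<Rightarrow> ereal) \<Rightarrow> (nat \<Rightarrow> real \<Rightarrow> real) \<Rightarrow> (nat \<Rightarrow> real)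
    \<Rightarrow> nat \<Rightarrow> ereal" where
  "m_val n J K y j = (SUP t\<in>{yy n y j .. yy n y (j + 1)}.
      J t + (\<Sum>i\<in>{1..n}. Kext (K i) (t - y i)))"

definition inY :: "nat \<Rightarrow> (real \<Rightarrow> ereal) \<Rightarrow> (nat \<Rightarrow> real \<Rightarrow> real) \<Rightarrow> (nat \<Rightarrow> real) \<Rightarrow> bool" where
  "inY n J K y \<longleftrightarrow> inS n y \<and> (\<forall>j\<in>{0..n}. m_val n J K y j \<noteq> -\<infinity>)"

text \<open>Relative interior (w.r.t. [0,1]) of I_j(y).\<close>
definition rintI :: "nat \<Rightarrow> (nat \<Rightarrow> real) \<Rightarrow> nat \<Rightarrow> real set" where
  "rintI n y j = {t. (if j = 0 then 0 \<le> t else yy n y j < t) \<and>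
                     (if j = n then t \<le> 1 else t < yy n y (j + 1))}"

end

theory Submission
  imports Defs "Jordan_Normal_Form.Determinant"
begin

lemma conc_slope:
  fixes f :: "real \<Rightarrow> real"
  assumes f: "concave_on I f" and I: "u \<in> I" "v \<in> I" and t: "u < t" "t < v"
  shows "(f t - f u) / (t - u) \<ge> (f v - f u) / (v - u)"
    and "(f v - f u) / (v - u) \<ge> (f v - f t) / (v - t)"
proof -
  have c: "convex_on I (\<lambda>x. - f x)" using f by (simp add: convex_on_iff_concave)
  note s = convex_on_slope_le[OF c I t]
  have e1: "(- f u - - f t) / (u - t) = - ((f t - f u) / (t - u))"
    using t by (simp add: field_simps)
  have e2: "(- f u - - f v) / (u - v) = - ((f v - f u) / (v - u))"
    using t by (simp add: field_simps)
  have e3: "(- f t - - f v) / (t - v) = - ((f v - f t) / (v - t))"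
    using t by (simp add: field_simps)
  show "(f t - f u) / (t - u) \<ge> (f v - f u) / (v - u)" using s(1) e1 e2 by simp
  show "(f v - f u) / (v - u) \<ge> (f v - f t) / (v - t)" using s(2) e2 e3 by simp
qed

definition LDi :: "(real \<Rightarrow> real) \<Rightarrow> real \<Rightarrow> real \<Rightarrow> real" where
  "LDi f a x = Inf ((\<lambda>u. (f x - f u) / (x - u)) ` {a<..<x})"

lemma LDi_props:
  fixes f :: "real \<Rightarrow> real"
  assumes f: "concave_on {a<..<b} f" and x: "a < x" "x < b"
  shows "bdd_below ((\<lambda>u. (f x - f u) / (x - u)) ` {a<..<x})"
    and "\<And>u. a < u \<Longrightarrow> u < x \<Longrightarrow> LDi f a x \<le> (f x - f u) / (x - u)"
    and "\<And>e. e > 0 \<Longrightarrow> \<exists>u. a < u \<and> u < x \<and> (f x - f u) / (x - u) < LDi f a x + e"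
proof -
  obtain w where w: "x < w" "w < b" using x dense by blast
  show bb: "bdd_below ((\<lambda>u. (f x - f u) / (x - u)) ` {a<..<x})"
  proof (rule bdd_belowI2[where m = "(f w - f x) / (w - x)"])
    fix u assume u: "u \<in> {a<..<x}"
    have "(f w - f x) / (w - x) \<le> (f w - f u) / (w - u)"
      using conc_slope(2)[OF f, of u w x] u x w by auto
    also have "\<dots> \<le> (f x - f u) / (x - u)"
      using conc_slope(1)[OF f, of u w x] u x w by auto
    finally show "(f w - f x) / (w - x) \<le> (f x - f u) / (x - u)" .
  qed
  show "\<And>u. a < u \<Longrightarrow> u < x \<Longrightarrow> LDi f a x \<le> (f x - f u) / (x - u)"
    unfolding LDi_def by (rule cInf_lower[OF _ bb]) auto
  fix e :: real assume e: "e > 0"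
  have ne: "(\<lambda>u. (f x - f u) / (x - u)) ` {a<..<x} \<noteq> {}" using x by auto
  have "Inf ((\<lambda>u. (f x - f u) / (x - u)) ` {a<..<x}) < LDi f a x + e"
    unfolding LDi_def using e by simp
  then obtain z where "z \<in> (\<lambda>u. (f x - f u) / (x - u)) ` {a<..<x}" "z < LDi f a x + e"
    using cInf_less_iff[OF ne bb] by blast
  then show "\<exists>u. a < u \<and> u < x \<and> (f x - f u) / (x - u) < LDi f a x + e" by auto
qed

lemma left_deriv_eq:
  fixes f :: "real \<Rightarrow> real"
  assumes f: "concave_on {a<..<b} f" and x: "a < x" "x < b"
  shows "left_deriv f x = LDi f a x"
proof -
  have lim: "((\<lambda>h. (f (x + h) - f x) / h) \<longlongrightarrow> LDi f a x) (at_left 0)"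
  proof (rule tendstoI)
    fix e :: real assume e: "e > 0"
    obtain u0 where u0: "a < u0" "u0 < x" "(f x - f u0) / (x - u0) < LDi f a x + e"
      using LDi_props(3)[OF f x e] by blast
    have "eventually (\<lambda>h. h \<in> {u0 - x<..<0}) (at_left (0::real))"
      by (rule eventually_at_left_real) (use u0 in auto)
    then show "eventually (\<lambda>h. dist ((f (x + h) - f x) / h) (LDi f a x) < e) (at_left 0)"
    proof (rule eventually_mono)
      fix h assume h: "h \<in> {u0 - x<..<0}"
      define u where "u = x + h"
      have u: "u0 < u" "u < x" using h u_def by auto
      have q: "(f (x + h) - f x) / h = (f x - f u) / (x - u)"
        unfolding u_def using h by (simp add: field_simps)
      have l: "LDi f a x \<le> (f x - f u) / (x - u)" using LDi_props(2)[OF f x] u u0 by auto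
      have "(f x - f u) / (x - u) \<le> (f x - f u0) / (x - u0)"
        using conc_slope(2)[OF f, of u0 x u] u u0 x by auto
      then show "dist ((f (x + h) - f x) / h) (LDi f a x) < e"
        using q l u0(3) by (simp add: dist_real_def)
    qed
  qed
  show ?thesis unfolding left_deriv_def
    by (rule tendsto_Lim[OF _ lim]) simp
qed

lemma left_deriv_mono:
  fixes f :: "real \<Rightarrow> real"
  assumes f: "concave_on {a<..<b} f" and uv: "a < u" "u \<le> v" "v < b"
  shows "left_deriv f v \<le> left_deriv f u"
proof (cases "u = v")
  case True then show ?thesis by simp
next
  case False
  then have uv': "u < v" using uv by simp
  have 1: "left_deriv f v \<le> (f v - f u) / (v - u)"
    using left_deriv_eq[OF f, of v] LDi_props(2)[OF f, of v u] uv uv' by auto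
  have 2: "(f v - f u) / (v - u) \<le> left_deriv f u"
  proof -
    have "(f v - f u) / (v - u) \<le> LDi f a u"
      unfolding LDi_def
    proof (rule cInf_greatest)
      show "(\<lambda>w. (f u - f w) / (u - w)) ` {a<..<u} \<noteq> {}" using uv by auto
      fix z assume "z \<in> (\<lambda>w. (f u - f w) / (u - w)) ` {a<..<u}"
      then obtain w where w: "a < w" "w < u" "z = (f u - f w) / (u - w)" by auto
      have "(f v - f u) / (v - u) \<le> (f v - f w) / (v - w)"
        using conc_slope(2)[OF f, of w v u] w uv uv' by auto
      also have "\<dots> \<le> (f u - f w) / (u - w)"
        using conc_slope(1)[OF f, of w v u] w uv uv' by auto
      finally show "(f v - f u) / (v - u) \<le> z" using w by simp
    qed
    then show ?thesis using left_deriv_eq[OF f, of u] uv uv' by simp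
  qed
  show ?thesis using 1 2 by simp
qed

lemma deriv_eq_left_deriv:
  fixes f :: "real \<Rightarrow> real"
  assumes f: "concave_on {a<..<b} f" and x: "a < x" "x < b" and d: "f differentiable (at x)"
  shows "deriv f x = left_deriv f x"
proof -
  have "(f has_field_derivative deriv f x) (at x)"
    using d by (simp add: DERIV_deriv_iff_real_differentiable)
  then have "((\<lambda>h. (f (x + h) - f x) / h) \<longlongrightarrow> deriv f x) (at 0)"
    by (simp add: DERIV_def)
  then have l: "((\<lambda>h. (f (x + h) - f x) / h) \<longlongrightarrow> deriv f x) (at_left 0)"
    by (rule tendsto_mono[rotated]) (simp add: at_le)
  show ?thesis unfolding left_deriv_def
    by (rule tendsto_Lim[OF _ l, symmetric]) simp
qed

lemma left_deriv_lc:
  fixes f :: "real \<Rightarrow> real"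
  assumes f: "concave_on {a<..<b} f" and x: "a < x" "x < b" and e: "e > 0"
  shows "\<exists>u0. a < u0 \<and> u0 < x \<and> (\<forall>u. u0 < u \<and> u < x \<longrightarrow> left_deriv f u \<le> left_deriv f x + e)"
proof -
  obtain w where w: "a < w" "w < x" "(f x - f w) / (x - w) < LDi f a x + e / 2"
    using LDi_props(3)[OF f x, of "e/2"] e by auto
  have "continuous_on {a<..<b} (\<lambda>x. - f x)"
    by (rule convex_on_continuous) (use f in \<open>auto simp: convex_on_iff_concave\<close>)
  then have "continuous_on {a<..<b} f"
    using continuous_on_minus[of _ "\<lambda>x. - f x"] by simp
  then have cx: "isCont f x" using x continuous_on_eq_continuous_at[of "{a<..<b}" f] by auto
  have "((\<lambda>u. (f u - f w) / (u - w)) \<longlongrightarrow> (f x - f w) / (x - w)) (at x)"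
    by (intro tendsto_intros isCont_tendsto_compose[OF cx] tendsto_ident_at) (use w in auto)
  then have "((\<lambda>u. (f u - f w) / (u - w)) \<longlongrightarrow> (f x - f w) / (x - w)) (at_left x)"
    by (rule tendsto_mono[rotated]) (simp add: at_le)
  then have ev: "eventually (\<lambda>u. (f u - f w) / (u - w) < (f x - f w) / (x - w) + e/2) (at_left x)"
    by (rule order_tendstoD) (use e in auto)
  then obtain b0 where b0: "b0 < x" "\<forall>u>b0. u < x \<longrightarrow> (f u - f w) / (u - w) < (f x - f w) / (x - w) + e/2"
    unfolding eventually_at_left_field by blast
  show ?thesis
  proof (intro exI[of _ "max b0 w"] conjI allI impI)
    show "a < max b0 w" using w by auto
    show "max b0 w < x" using w b0 by auto
    fix u assume u: "max b0 w < u \<and> u < x"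
    have "left_deriv f u = LDi f a u" using left_deriv_eq[OF f, of u] u w x by auto
    also have "\<dots> \<le> (f u - f w) / (u - w)" using LDi_props(2)[OF f, of u w] u w x by auto
    also have "\<dots> < (f x - f w) / (x - w) + e/2" using b0(2) u by auto
    also have "\<dots> < LDi f a x + e" using w(3) by linarith
    also have "\<dots> = left_deriv f x + e" using left_deriv_eq[OF f x] by simp
    finally show "left_deriv f u \<le> left_deriv f x + e" by simp
  qed
qed

lemma jump:
  fixes K :: "real \<Rightarrow> real"
  assumes k: "kernel K" and pm: "PM c K" and s: "0 < s" "s < 1"
  shows "left_deriv K (s - 1) + c \<le> left_deriv K s"
proof (rule field_le_epsilon)
  fix e :: real assume e: "e > 0"
  have c1: "concave_on {-1<..<0} K" and c2: "concave_on {0<..<1} K"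
    using k unfolding kernel_def by auto
  obtain u0 where u0: "0 < u0" "u0 < s" "\<forall>u. u0 < u \<and> u < s \<longrightarrow> left_deriv K u \<le> left_deriv K s + e"
    using left_deriv_lc[OF c2 s e] by blast
  have ae: "AE t in lborel. t \<in> {0<..<1} \<longrightarrow>
      K differentiable (at t) \<and> K differentiable (at (t - 1)) \<and> deriv K t - deriv K (t - 1) \<ge> c"
    using pm unfolding PM_def by simp
  obtain u where u: "u0 < u" "u < s" "K differentiable (at u)" "K differentiable (at (u - 1))"
      "deriv K u - deriv K (u - 1) \<ge> c"
  proof -
    from ae obtain N where N: "{x \<in> space lborel. \<not> (x \<in> {0<..<1} \<longrightarrow>
      K differentiable (at x) \<and> K differentiable (at (x - 1)) \<and> deriv K x - deriv K (x - 1) \<ge> c)} \<subseteq> N"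
      "emeasure lborel N = 0" "N \<in> sets lborel" by (rule AE_E)
    have "\<not> {u0<..<s} \<subseteq> N"
    proof
      assume "{u0<..<s} \<subseteq> N"
      then have "emeasure lborel {u0<..<s} \<le> emeasure lborel N"
        by (rule emeasure_mono) (use N in auto)
      then show False using N u0 by simp
    qed
    then obtain u where "u \<in> {u0<..<s}" "u \<notin> N" by blast
    moreover have "u \<in> {0<..<1}" using calculation u0 s by auto
    ultimately have "K differentiable (at u) \<and> K differentiable (at (u - 1)) \<and> deriv K u - deriv K (u - 1) \<ge> c"
      using N(1) by auto
    then show ?thesis using that \<open>u \<in> {u0<..<s}\<close> by auto
  qed
  have "left_deriv K (s - 1) \<le> left_deriv K (u - 1)"
    by (rule left_deriv_mono[OF c1]) (use u u0 s in auto)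
  also have "\<dots> = deriv K (u - 1)"
    using deriv_eq_left_deriv[OF c1, of "u - 1"] u u0 s by auto
  also have "\<dots> \<le> deriv K u - c" using u by simp
  also have "deriv K u = left_deriv K u"
    using deriv_eq_left_deriv[OF c2, of u] u u0 s by auto
  also have "left_deriv K u \<le> left_deriv K s + e" using u0(3) u by auto
  finally show "left_deriv K (s - 1) + c \<le> left_deriv K s + e" by simp
qed

lemma invert_dd:
  fixes a :: "nat \<Rightarrow> nat \<Rightarrow> real"
  assumes dom: "\<forall>r\<in>{1..n}. a r r - (\<Sum>j\<in>{1..n} - {r}. \<bar>a j r\<bar>) > 0"
  shows "invertible_mat (mat n n (\<lambda>(j, r). a (j + 1) (r + 1)))"
proof -
  define A where "A = mat n n (\<lambda>(j, r). a (j + 1) (r + 1))"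
  have A: "A \<in> carrier_mat n n" unfolding A_def by simp
  have dA: "Determinant.det A \<noteq> 0"
  proof
    assume "Determinant.det A = 0"
    then have "Determinant.det (transpose_mat A) = 0" using Determinant.det_transpose[OF A] by simp
    then obtain v where v: "v \<in> carrier_vec n" "v \<noteq> 0\<^sub>v n" "transpose_mat A *\<^sub>v v = 0\<^sub>v n"
      using det_0_iff_vec_prod_zero[of "transpose_mat A" n] A by auto
    have n0: "n \<noteq> 0"
    proof
      assume "n = 0" then have "v = 0\<^sub>v n" using v(1) by (intro eq_vecI) auto
      then show False using v(2) by simp
    qed
    define M where "M = Max ((\<lambda>j. \<bar>v $ j\<bar>) ` {..<n})"
    have "M \<in> (\<lambda>j. \<bar>v $ j\<bar>) ` {..<n}" unfolding M_def using n0 by (intro Max_in) auto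
    then obtain m where m: "m < n" "\<bar>v $ m\<bar> = M" by auto
    have vle: "\<And>j. j < n \<Longrightarrow> \<bar>v $ j\<bar> \<le> \<bar>v $ m\<bar>" unfolding m(2) M_def by (intro Max_ge) auto
    have vpos: "\<bar>v $ m\<bar> > 0"
    proof (rule ccontr)
      assume "\<not> \<bar>v $ m\<bar> > 0"
      then have "\<And>j. j < n \<Longrightarrow> \<bar>v $ j\<bar> \<le> 0" using vle by (meson order_trans not_less)
      then have "\<And>j. j < n \<Longrightarrow> v $ j = 0" by simp
      then have "v = 0\<^sub>v n" using v(1) by (intro eq_vecI) auto
      then show False using v(2) by simp
    qed
    have "(transpose_mat A *\<^sub>v v) $ m = 0" using v(3) m(1) by simp
    moreover have "(transpose_mat A *\<^sub>v v) $ m = (\<Sum>j<n. a (j + 1) (m + 1) * v $ j)"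
      using m(1) v(1) A unfolding A_def
      by (simp add: scalar_prod_def lessThan_atLeast0 mult.commute)
    ultimately have eq0: "(\<Sum>j<n. a (j + 1) (m + 1) * v $ j) = 0" by simp
    have split: "(\<Sum>j<n. a (j + 1) (m + 1) * v $ j)
        = a (m + 1) (m + 1) * v $ m + (\<Sum>j\<in>{..<n} - {m}. a (j + 1) (m + 1) * v $ j)"
      using m(1) by (subst sum.remove[of _ m]) auto
    define S where "S = (\<Sum>j\<in>{..<n} - {m}. \<bar>a (j + 1) (m + 1)\<bar>)"
    have reidx: "{1..n} - {Suc m} = Suc ` ({..<n} - {m})"
    proof
      show "{1..n} - {Suc m} \<subseteq> Suc ` ({..<n} - {m})"
      proof
        fix x assume x: "x \<in> {1..n} - {Suc m}"
        then have "x = Suc (x - 1)" "x - 1 \<in> {..<n} - {m}" by auto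
        then show "x \<in> Suc ` ({..<n} - {m})" by (rule image_eqI)
      qed
    qed auto
    have "(\<Sum>j\<in>{1..n} - {Suc m}. \<bar>a j (Suc m)\<bar>) = S"
      unfolding reidx S_def by (subst sum.reindex) auto
    then have dm: "a (m + 1) (m + 1) - S > 0" using dom m(1) by force
    have S0: "S \<ge> 0" unfolding S_def by (intro sum_nonneg) auto
    have "a (m + 1) (m + 1) * \<bar>v $ m\<bar> = \<bar>a (m + 1) (m + 1) * v $ m\<bar>"
      using dm S0 by (simp add: abs_mult)
    also have "\<dots> = \<bar>\<Sum>j\<in>{..<n} - {m}. a (j + 1) (m + 1) * v $ j\<bar>"
      using eq0 split by (simp add: eq_neg_iff_add_eq_0[symmetric])
    also have "\<dots> \<le> (\<Sum>j\<in>{..<n} - {m}. \<bar>a (j + 1) (m + 1) * v $ j\<bar>)" by (rule sum_abs)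
    also have "\<dots> \<le> (\<Sum>j\<in>{..<n} - {m}. \<bar>a (j + 1) (m + 1)\<bar> * \<bar>v $ m\<bar>)"
      by (intro sum_mono) (auto simp: abs_mult intro: mult_left_mono vle)
    also have "\<dots> = S * \<bar>v $ m\<bar>" unfolding S_def by (simp add: sum_distrib_right)
    finally have "(a (m + 1) (m + 1) - S) * \<bar>v $ m\<bar> \<le> 0" by (simp add: algebra_simps)
    moreover have "(a (m + 1) (m + 1) - S) * \<bar>v $ m\<bar> > 0" using dm vpos by simp
    ultimately show False by simp
  qed
  have "A \<in> Units (ring_mat TYPE(real) n ())" by (rule det_non_zero_imp_unit[OF A dA])
  then obtain B where B: "B \<in> carrier_mat n n" "B * A = 1\<^sub>m n" "A * B = 1\<^sub>m n"
    unfolding Units_def ring_mat_def by auto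
  have "invertible_mat A"
    unfolding invertible_mat_def inverts_mat_def using A B by auto
  then show ?thesis unfolding A_def .
qed

lemma yy_strict:
  assumes S: "inS n y" shows "i < j \<Longrightarrow> j \<le> n + 1 \<Longrightarrow> yy n y i < yy n y j"
proof (induction j)
  case 0 then show ?case by simp
next
  case (Suc j)
  have step: "yy n y j < yy n y (Suc j)" using S Suc.prems unfolding inS_def by auto
  show ?case
  proof (cases "i = j")
    case True then show ?thesis using step by simp
  next
    case False
    then have "yy n y i < yy n y j" using Suc by auto
    then show ?thesis using step by simp
  qed
qed

lemma y_props:
  assumes S: "inS n y"
  shows "\<And>i. 1 \<le> i \<Longrightarrow> i \<le> n \<Longrightarrow> 0 < y i"
    and "\<And>i. 1 \<le> i \<Longrightarrow> i \<le> n \<Longrightarrow> y i < 1"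
    and "\<And>i j. 1 \<le> i \<Longrightarrow> i \<le> j \<Longrightarrow> j \<le> n \<Longrightarrow> y i \<le> y j"
proof -
  fix i assume i: "1 \<le> i" "i \<le> n"
  show "0 < y i" using yy_strict[OF S, of 0 i] i by (simp add: yy_def)
  show "y i < 1" using yy_strict[OF S, of i "n+1"] i by (simp add: yy_def)
next
  fix i j :: nat assume ij: "1 \<le> i" "i \<le> j" "j \<le> n"
  show "y i \<le> y j"
  proof (cases "i = j")
    case False
    then show ?thesis using yy_strict[OF S, of i j] ij by (simp add: yy_def)
  qed simp
qed

lemma rint_bounds:
  assumes S: "inS n y" and j: "j \<le> n" and t: "t \<in> rintI n y j"
  shows "0 \<le> t" "t \<le> 1" "0 < j \<Longrightarrow> y j < t" "j < n \<Longrightarrow> t < y (j + 1)"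
proof -
  have lo: "if j = 0 then 0 \<le> t else yy n y j < t" and hi: "if j = n then t \<le> 1 else t < yy n y (j + 1)"
    using t unfolding rintI_def by auto
  show "0 < j \<Longrightarrow> y j < t" using lo j by (simp add: yy_def)
  show "j < n \<Longrightarrow> t < y (j + 1)" using hi j by (simp add: yy_def)
  show "0 \<le> t"
  proof (cases "j = 0")
    case False
    then have "yy n y 0 < yy n y j" using yy_strict[OF S, of 0 j] j by simp
    then show ?thesis using lo False by (simp add: yy_def)
  qed (use lo in simp)
  show "t \<le> 1"
  proof (cases "j = n")
    case False
    then have "yy n y (j + 1) < yy n y (n + 1) \<or> j + 1 = n + 1" using yy_strict[OF S, of "j+1" "n+1"] j by force
    then have "yy n y (j + 1) \<le> 1" using False j by (auto simp: yy_def)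
    then show ?thesis using hi False by simp
  qed (use hi in simp)
qed

lemma telescope:
  fixes f :: "nat \<Rightarrow> real"
  shows "(\<Sum>j\<in>{1..n}. f j - f (j - 1)) = f n - f 0"
  by (induction n) (auto simp: sum.cl_ivl_Suc)

theorem lemma6p4:
  fixes n :: nat and J :: "real \<Rightarrow> ereal" and K :: "nat \<Rightarrow> real \<Rightarrow> real" and c :: real
    and y :: "nat \<Rightarrow> real" and tl tu :: "nat \<Rightarrow> real" and mu :: "nat \<Rightarrow> nat \<Rightarrow> real"
  assumes "n_field n J"
    and "\<forall>i\<in>{1..n}. kernel (K i)"
    and "c > 0"
    and "\<forall>i\<in>{1..n}. PM c (K i)"
    and "inY n J K y"
    and "\<forall>j\<in>{0..n}. tl j \<in> rintI n y j \<and> tu j \<in> rintI n y j \<and> tl j \<le> tu j"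
    and "\<forall>j\<in>{0..n}. \<forall>r\<in>{1..n}.
           left_deriv (K r) (tu j - y r) \<le> mu j r \<and> mu j r \<le> left_deriv (K r) (tl j - y r)"
  shows "(\<forall>r\<in>{1..n}. (mu r r - mu (r - 1) r)
            - (\<Sum>j\<in>{1..n} - {r}. \<bar>mu j r - mu (j - 1) r\<bar>) \<ge> c)
         \<and> invertible_mat (mat n n (\<lambda>(j, r). mu (j + 1) (r + 1) - mu j (r + 1)))"
proof -
  note kern = assms(2) and cpos = assms(3) and pm = assms(4) and tt = assms(6) and muB = assms(7)
  have S: "inS n y" using assms(5) unfolding inY_def by simp
  have col: "c \<le> (mu r r - mu (r - 1) r) - (\<Sum>j\<in>{1..n} - {r}. \<bar>mu j r - mu (j - 1) r\<bar>)"
    if r: "r \<in> {1..n}" for r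
  proof -
    let ?L = "left_deriv (K r)"
    have c1: "concave_on {-1<..<0} (K r)" and c2: "concave_on {0<..<1} (K r)"
      using kern r unfolding kernel_def by auto
    have yr: "0 < y r" "y r < 1" using y_props(1,2)[OF S] r by auto
    have A: "mu j r \<le> mu (j - 1) r" if j: "j \<in> {1..n}" "j \<noteq> r" for j
    proof -
      have t1: "tu (j - 1) \<in> rintI n y (j - 1)" using tt j by auto
      have t2: "tl j \<in> rintI n y j" using tt j by auto
      have t1y: "tu (j - 1) < y j" using rint_bounds(4)[OF S _ t1] j by auto
      have t2y: "y j < tl j" using rint_bounds(3)[OF S _ t2] j by auto
      have m1: "mu j r \<le> ?L (tl j - y r)" using muB j r by auto
      have m2: "?L (tu (j - 1) - y r) \<le> mu (j - 1) r" using muB j r by auto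
      have "?L (tl j - y r) \<le> ?L (tu (j - 1) - y r)"
      proof (cases "j < r")
        case True
        have "tl j < y (j + 1)" using rint_bounds(4)[OF S _ t2] j True r by auto
        moreover have "y (j + 1) \<le> y r" using y_props(3)[OF S, of "j+1" r] True r by auto
        moreover have "0 \<le> tu (j - 1)" using rint_bounds(1)[OF S _ t1] j by auto
        ultimately show ?thesis
          by (intro left_deriv_mono[OF c1]) (use t1y t2y yr in auto)
      next
        case False
        then have jr: "r < j" using j by auto
        have "y (j - 1) < tu (j - 1)" using rint_bounds(3)[OF S _ t1] j jr r by auto
        moreover have "y r \<le> y (j - 1)" using y_props(3)[OF S, of r "j - 1"] jr r j by auto
        moreover have "tl j \<le> 1" using rint_bounds(2)[OF S _ t2] j by auto
        ultimately show ?thesis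
          by (intro left_deriv_mono[OF c2]) (use t1y t2y yr in auto)
      qed
      then show ?thesis using m1 m2 by simp
    qed
    have B: "c \<le> mu n r - mu 0 r"
    proof -
      have n1: "1 \<le> n" using r by auto
      have tun: "tu n \<in> rintI n y n" and tl0: "tl 0 \<in> rintI n y 0" using tt by auto
      have "y n < tu n" using rint_bounds(3)[OF S _ tun] n1 by auto
      moreover have "y r \<le> y n" using y_props(3)[OF S, of r n] r by auto
      moreover have "tu n \<le> 1" using rint_bounds(2)[OF S _ tun] by auto
      ultimately have s: "0 < tu n - y r" "tu n - y r < 1" using yr by auto
      have jmp: "?L (tu n - y r - 1) + c \<le> ?L (tu n - y r)"
        using jump[of "K r" c "tu n - y r"] kern pm r s by auto
      have "tl 0 < y 1" using rint_bounds(4)[OF S _ tl0] n1 by auto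
      moreover have "y 1 \<le> y r" using y_props(3)[OF S, of 1 r] r by auto
      moreover have "0 \<le> tl 0" using rint_bounds(1)[OF S _ tl0] by auto
      ultimately have "?L (tl 0 - y r) \<le> ?L (tu n - y r - 1)"
        by (intro left_deriv_mono[OF c1]) (use s yr \<open>tu n \<le> 1\<close> in auto)
      moreover have "mu 0 r \<le> ?L (tl 0 - y r)" "?L (tu n - y r) \<le> mu n r" using muB r by auto
      ultimately show ?thesis using jmp by linarith
    qed
    have "(\<Sum>j\<in>{1..n} - {r}. \<bar>mu j r - mu (j - 1) r\<bar>) = (\<Sum>j\<in>{1..n} - {r}. - (mu j r - mu (j - 1) r))"
      by (rule sum.cong) (use A in auto)
    also have "\<dots> = - (\<Sum>j\<in>{1..n} - {r}. mu j r - mu (j - 1) r)" by (rule sum_negf)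
    also have "\<dots> = - ((\<Sum>j\<in>{1..n}. mu j r - mu (j - 1) r) - (mu r r - mu (r - 1) r))"
      using r by (subst sum_diff1) auto
    also have "\<dots> = - ((mu n r - mu 0 r) - (mu r r - mu (r - 1) r))"
      using telescope[of "\<lambda>j. mu j r" n] by simp
    finally show ?thesis using B by simp
  qed
  have inv: "invertible_mat (mat n n (\<lambda>(j, r). mu (j + 1) (r + 1) - mu (j + 1 - 1) (r + 1)))"
  proof (rule invert_dd, intro ballI)
    fix r assume "r \<in> {1..n}"
    then show "0 < mu r r - mu (r - 1) r - (\<Sum>j\<in>{1..n} - {r}. \<bar>mu j r - mu (j - 1) r\<bar>)"
      using col[of r] cpos by linarith
  qed
  show ?thesis using col inv by simp
qed

end
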